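(* Let $Q$ be a weakly compact convex subset of a Banach space $U$. Let $r>0$, let $\beta:Q\to[0,1)$, and let $\beta_n:Q\to\mathbb{R}$ ($n\geq1$) be functions with $\beta_n(p)\to\beta(p)$ for every $p\in Q$. Suppose $T:Q\to Q$ satisfies: for all $p,q\in Q$ and $n\geq1$, $\|p-q\|<r$ implies $\|T^np-T^nq\|\leq\beta_n(p)\|p-q\|$. If there exists $q_0\in Q$ such that the asymptotic radius of $\{T^nq_0\}_n$ relative to $Q$ is less than $r$, then $T$ has a unique fixed point.
   Context: For a bounded sequence $\{x_n\}_n$ in $U$, its asymptotic radius relative to $Q$ is $\inf_{y\in Q}\limsup_{n\to\infty}\|x_n-y\|$. *)

theory Defs
  imports "HOL-Analysis.Analysis" "HOL-Library.Liminf_Limsup"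
begin

definition weak_topology :: "('a::real_normed_vector) topology" where
  "weak_topology = topology_generated_by
     {f -` U | (f :: 'a \<Rightarrow> real) U. bounded_linear f \<and> open U}"

definition weakly_compact :: "('a::real_normed_vector) set \<Rightarrow> bool" where
  "weakly_compact Q \<longleftrightarrow> compactin weak_topology Q"

definition asym_radius :: "('a::real_normed_vector) set \<Rightarrow> (nat \<Rightarrow> 'a) \<Rightarrow> ereal" where
  "asym_radius Q x = (INF y\<in>Q. limsup (\<lambda>n. ereal (norm (x n - y))))"

end

theory Submission
  imports Defs
begin

lemma hahn_banach_aux:
  fixes p :: "'a::real_vector \<Rightarrow> real"
  assumes sub: "\<And>x y. p (x + y) \<le> p x + p y"
    and hom: "\<And>t x. 0 < t \<Longrightarrow> p (t *\<^sub>R x) = t * p x"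
    and p0: "p 0 = 0"
    and init: "\<And>t. t * f0 \<le> p (t *\<^sub>R z0)"
  shows "\<exists>F. linear F \<and> (\<forall>x. F x \<le> p x) \<and> F z0 = f0"
proof -
  define H0 where "H0 = range (\<lambda>t. (t *\<^sub>R z0, t * f0))"
  define A where "A = {H. H0 \<subseteq> H \<and> (\<forall>x a y b. (x,a) \<in> H \<longrightarrow> (y,b) \<in> H \<longrightarrow> (x+y, a+b) \<in> H)
     \<and> (\<forall>x a c. (x,a) \<in> H \<longrightarrow> (c *\<^sub>R x, c*a) \<in> H) \<and> (\<forall>x a. (x,a) \<in> H \<longrightarrow> a \<le> p x)}"
  have H0A: "H0 \<in> A"
  proof -
    have "(s *\<^sub>R z0 + t *\<^sub>R z0, s * f0 + t * f0) \<in> H0" for s t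
      unfolding H0_def by (rule image_eqI[where x="s+t"]) (auto simp: scaleR_add_left distrib_right)
    moreover have "(c *\<^sub>R (t *\<^sub>R z0), c * (t * f0)) \<in> H0" for c t
      unfolding H0_def by (rule image_eqI[where x="c*t"]) auto
    ultimately show ?thesis unfolding A_def H0_def using init by auto
  qed
  have "\<forall>C\<in>chains A. \<exists>U\<in>A. \<forall>X\<in>C. X \<subseteq> U"
  proof
    fix C assume C: "C \<in> chains A"
    show "\<exists>U\<in>A. \<forall>X\<in>C. X \<subseteq> U"
    proof (cases "C = {}")
      case True then show ?thesis using H0A by auto
    next
      case False
      have CA: "X \<in> A" if "X \<in> C" for X using C that chainsD2 by blast
      have "\<Union>C \<in> A"
        unfolding A_def
      proof (intro CollectI conjI allI impI)
        show "H0 \<subseteq> \<Union>C" using False CA unfolding A_def by blast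
      next
        fix x a y b assume "(x,a) \<in> \<Union>C" "(y,b) \<in> \<Union>C"
        then obtain X Y where XY: "X \<in> C" "Y \<in> C" "(x,a) \<in> X" "(y,b) \<in> Y" by auto
        show "(x+y, a+b) \<in> \<Union>C"
        proof (cases "X \<subseteq> Y")
          case True then show ?thesis using XY CA[of Y] unfolding A_def by blast
        next
          case False then have "Y \<subseteq> X" using chainsD[OF C XY(1,2)] by auto
          then show ?thesis using XY CA[of X] unfolding A_def by blast
        qed
      next
        fix x a c assume "(x,a) \<in> \<Union>C"
        then show "(c *\<^sub>R x, c*a) \<in> \<Union>C" using CA unfolding A_def by blast
      next
        fix x a assume "(x,a) \<in> \<Union>C"
        then show "a \<le> p x" using CA unfolding A_def by blast
      qed
      then show ?thesis by auto
    qed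
  qed
  then obtain M where M: "M \<in> A" and max: "\<forall>X\<in>A. M \<subseteq> X \<longrightarrow> X = M"
    using Zorn_Lemma2[of A] by blast
  have H0M: "H0 \<subseteq> M" using M unfolding A_def by blast
  have Madd: "(x,a) \<in> M \<Longrightarrow> (y,b) \<in> M \<Longrightarrow> (x+y, a+b) \<in> M" for x a y b
    using M unfolding A_def by blast
  have Mscale: "(x,a) \<in> M \<Longrightarrow> (c *\<^sub>R x, c*a) \<in> M" for x a c
    using M unfolding A_def by blast
  have Mdom: "(x,a) \<in> M \<Longrightarrow> a \<le> p x" for x a
    using M unfolding A_def by blast
  have M00: "(0,0) \<in> M" using H0M unfolding H0_def by (force simp: image_iff)
  have func: "a = b" if "(x,a) \<in> M" "(x,b) \<in> M" for x a b
  proof -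
    have "(x + (-1) *\<^sub>R x, a + (-1) * b) \<in> M" using Madd[OF that(1) Mscale[OF that(2)]] .
    then have 1: "(0, a - b) \<in> M" by simp
    have "(-1) * (a - b) \<le> p ((-1) *\<^sub>R 0)" using Mdom[OF Mscale[OF 1]] .
    moreover have "a - b \<le> p 0" using Mdom[OF 1] .
    ultimately show ?thesis using p0 by simp
  qed
  have total: "\<forall>z. \<exists>a. (z,a) \<in> M"
  proof (rule ccontr)
    assume "\<not> (\<forall>z. \<exists>a. (z,a) \<in> M)"
    then obtain z where z: "\<And>a. (z,a) \<notin> M" by blast
    define S where "S = {b - p (u - z) | u b. (u,b) \<in> M}"
    define c where "c = Sup S"
    have bdd: "b - p (u - z) \<le> p (v + z) - d" if "(u,b) \<in> M" "(v,d) \<in> M" for u b v d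
    proof -
      have "b + d \<le> p (u + v)" using Mdom[OF Madd[OF that]] .
      also have "u + v = (u - z) + (v + z)" by simp
      finally show ?thesis using sub[of "u - z" "v + z"] by linarith
    qed
    have Sne: "S \<noteq> {}" using M00 unfolding S_def by blast
    have Sbdd: "bdd_above S" unfolding S_def bdd_above_def using bdd[OF _ M00] by fastforce
    have c_ge: "b - p (u - z) \<le> c" if "(u,b) \<in> M" for u b
      unfolding c_def by (rule cSup_upper[OF _ Sbdd]) (use that S_def in blast)
    have c_le: "c \<le> p (v + z) - d" if "(v,d) \<in> M" for v d
      unfolding c_def by (rule cSup_least[OF Sne]) (use bdd that S_def in blast)
    define M' where "M' = {(x + t *\<^sub>R z, a + t * c) | x a t. (x,a) \<in> M}"
    have "M' \<in> A"
      unfolding A_def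
    proof (intro CollectI conjI allI impI)
      show "H0 \<subseteq> M'" using H0M unfolding M'_def by force
    next
      fix x a y b assume "(x,a) \<in> M'" "(y,b) \<in> M'"
      then obtain x1 a1 t1 x2 a2 t2 where "(x1,a1) \<in> M" "(x2,a2) \<in> M"
        "x = x1 + t1 *\<^sub>R z" "a = a1 + t1 * c" "y = x2 + t2 *\<^sub>R z" "b = a2 + t2 * c"
        unfolding M'_def by blast
      then show "(x+y, a+b) \<in> M'" unfolding M'_def
        by (intro CollectI exI[of _ "x1+x2"] exI[of _ "a1+a2"] exI[of _ "t1+t2"])
           (auto simp: Madd algebra_simps)
    next
      fix x a k assume "(x,a) \<in> M'"
      then obtain x1 a1 t1 where "(x1,a1) \<in> M" "x = x1 + t1 *\<^sub>R z" "a = a1 + t1 * c"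
        unfolding M'_def by blast
      then have "(k *\<^sub>R x, k*a) = (k *\<^sub>R x1 + (k*t1) *\<^sub>R z, k*a1 + (k*t1)*c)"
        by (simp add: algebra_simps)
      moreover have "(k *\<^sub>R x1, k*a1) \<in> M" using Mscale \<open>(x1,a1) \<in> M\<close> by blast
      ultimately show "(k *\<^sub>R x, k*a) \<in> M'" unfolding M'_def by blast
    next
      fix y b assume "(y,b) \<in> M'"
      then obtain x a t where xa: "(x,a) \<in> M" and y: "y = x + t *\<^sub>R z" and b: "b = a + t * c"
        unfolding M'_def by blast
      show "b \<le> p y"
      proof (cases t "0::real" rule: linorder_cases)
        case equal then show ?thesis using Mdom[OF xa] y b by simp
      next
        case greater
        have "c \<le> p ((1/t) *\<^sub>R x + z) - (1/t) * a" using c_le[OF Mscale[OF xa]] .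
        then have "t * c \<le> t * p ((1/t) *\<^sub>R x + z) - a"
          using greater by (simp add: field_simps)
        also have "t * p ((1/t) *\<^sub>R x + z) = p (t *\<^sub>R ((1/t) *\<^sub>R x + z))" using hom[OF greater] by simp
        also have "t *\<^sub>R ((1/t) *\<^sub>R x + z) = y" using greater y by (simp add: scaleR_add_right)
        finally show ?thesis using b by simp
      next
        case less
        define s where "s = - t"
        have s: "0 < s" using less s_def by simp
        have "(1/s) * a - p ((1/s) *\<^sub>R x - z) \<le> c" using c_ge[OF Mscale[OF xa]] .
        then have "a - s * p ((1/s) *\<^sub>R x - z) \<le> s * c"
          using s by (simp add: field_simps)
        also have "s * p ((1/s) *\<^sub>R x - z) = p (s *\<^sub>R ((1/s) *\<^sub>R x - z))" using hom[OF s] by simp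
        also have "s *\<^sub>R ((1/s) *\<^sub>R x - z) = y" using s y s_def by (simp add: scaleR_diff_right)
        finally show ?thesis using b s_def by simp
      qed
    qed
    moreover have "M \<subseteq> M'" unfolding M'_def by force
    moreover have "(z, c) \<in> M'" unfolding M'_def using M00 by force
    ultimately show False using max z by blast
  qed
  define F where "F x = (THE a. (x,a) \<in> M)" for x
  have FM: "(x, F x) \<in> M" for x
    unfolding F_def using total func by (metis theI)
  have Feq: "(x,a) \<in> M \<Longrightarrow> F x = a" for x a using FM func by blast
  have "linear F"
  proof (rule linearI)
    show "F (x + y) = F x + F y" for x y using Feq[OF Madd[OF FM FM]] .
    show "F (c *\<^sub>R x) = c *\<^sub>R F x" for c x using Feq[OF Mscale[OF FM]] by simp
  qed
  moreover have "\<forall>x. F x \<le> p x" using FM Mdom by blast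
  moreover have "F z0 = f0"
  proof -
    have "(1 *\<^sub>R z0, 1 * f0) \<in> H0" unfolding H0_def by blast
    then show ?thesis using H0M Feq by auto
  qed
  ultimately show ?thesis by blast
qed

lemma infdist_ge:
  assumes "A \<noteq> {}" "\<And>a. a \<in> A \<Longrightarrow> d \<le> dist x a"
  shows "d \<le> infdist x A"
  using assms by (simp add: infdist_notempty cINF_greatest)

lemma separation:
  fixes C :: "'a::real_normed_vector set"
  assumes clC: "closed C" and cvC: "convex C" and neC: "C \<noteq> {}" and x0: "x0 \<notin> C"
  shows "\<exists>(F::'a \<Rightarrow> real) a. bounded_linear F \<and> (\<forall>c\<in>C. F c \<le> a) \<and> a < F x0"
proof -
  define d0 where "d0 = infdist x0 C"
  have d0: "0 < d0" unfolding d0_def using infdist_pos_not_in_closed[OF clC neC x0] .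
  define \<delta> where "\<delta> = d0 / 2"
  have \<delta>: "0 < \<delta>" using d0 \<delta>_def by simp
  obtain c0 where c0: "c0 \<in> C" using neC by blast
  define D where "D = {c + w - x0 | c w. c \<in> C \<and> norm w \<le> \<delta>}"
  have Dnorm: "\<delta> \<le> norm v" if vD: "v \<in> D" for v
  proof -
    obtain c w where v: "v = c + w - x0" "c \<in> C" "norm w \<le> \<delta>" using vD D_def by blast
    have "d0 \<le> dist x0 c" unfolding d0_def using infdist_le[OF v(2)] .
    then have "d0 \<le> norm (c - x0)" by (simp add: dist_norm norm_minus_commute)
    moreover have "norm (c - x0) \<le> norm (c + w - x0) + norm w"
      using norm_triangle_ineq4[of "c + w - x0" w] by simp
    ultimately show ?thesis using v \<delta>_def by simp
  qed
  have Dconv: "convex D"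
  proof (rule convexI)
    fix u v and a b :: real assume u: "u \<in> D" and v: "v \<in> D" and "0 \<le> a" "0 \<le> b" "a + b = 1"
    then have ab: "0 \<le> a \<and> 0 \<le> b \<and> a + b = 1" by simp
    obtain c1 w1 where 1: "u = c1 + w1 - x0" "c1 \<in> C" "norm w1 \<le> \<delta>" using u D_def by blast
    obtain c2 w2 where 2: "v = c2 + w2 - x0" "c2 \<in> C" "norm w2 \<le> \<delta>" using v D_def by blast
    have "a *\<^sub>R c1 + b *\<^sub>R c2 \<in> C" using cvC 1 2 ab unfolding convex_def by blast
    moreover have "norm (a *\<^sub>R w1 + b *\<^sub>R w2) \<le> \<delta>"
    proof -
      have "norm (a *\<^sub>R w1 + b *\<^sub>R w2) \<le> a * norm w1 + b * norm w2"
        using norm_triangle_ineq[of "a *\<^sub>R w1" "b *\<^sub>R w2"] ab by simp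
      also have "\<dots> \<le> a * \<delta> + b * \<delta>" using ab 1 2 by (intro add_mono mult_left_mono) auto
      also have "\<dots> = \<delta>" using ab by (simp add: distrib_right[symmetric])
      finally show ?thesis .
    qed
    moreover have "a *\<^sub>R u + b *\<^sub>R v = (a *\<^sub>R c1 + b *\<^sub>R c2) + (a *\<^sub>R w1 + b *\<^sub>R w2) - x0"
    proof -
      have "a *\<^sub>R u + b *\<^sub>R v = (a *\<^sub>R c1 + b *\<^sub>R c2) + (a *\<^sub>R w1 + b *\<^sub>R w2) - (a + b) *\<^sub>R x0"
        unfolding 1(1) 2(1) by (simp add: algebra_simps)
      then show ?thesis using ab by simp
    qed
    ultimately show "a *\<^sub>R u + b *\<^sub>R v \<in> D" unfolding D_def by blast
  qed
  have v0D: "c0 - x0 \<in> D" unfolding D_def using c0 \<delta> by (intro CollectI exI[of _ c0] exI[of _ 0]) auto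
  define K where "K = {t *\<^sub>R v | t v. 0 \<le> t \<and> v \<in> D}"
  have K0: "0 \<in> K" unfolding K_def using v0D by (intro CollectI exI[of _ 0] exI[of _ "c0 - x0"]) auto
  have KD: "v \<in> D \<Longrightarrow> v \<in> K" for v unfolding K_def by (intro CollectI exI[of _ 1] exI[of _ v]) auto
  have Kne: "K \<noteq> {}" using K0 by blast
  have Kadd: "k1 + k2 \<in> K" if hk: "k1 \<in> K" "k2 \<in> K" for k1 k2
  proof -
    obtain t1 v1 where 1: "k1 = t1 *\<^sub>R v1" "0 \<le> t1" "v1 \<in> D" using hk K_def by blast
    obtain t2 v2 where 2: "k2 = t2 *\<^sub>R v2" "0 \<le> t2" "v2 \<in> D" using hk K_def by blast
    show ?thesis
    proof (cases "t1 + t2 = 0")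
      case True then have "t1 = 0" "t2 = 0" using 1 2 by auto
      then show ?thesis using 1 2 K0 by simp
    next
      case False
      define s where "s = t1 + t2"
      have s: "0 < s" using False 1 2 s_def by simp
      have "(t1 / s) *\<^sub>R v1 + (t2 / s) *\<^sub>R v2 \<in> D"
        using Dconv 1 2 s unfolding convex_def s_def by (auto simp: add_divide_distrib[symmetric])
      moreover have "k1 + k2 = s *\<^sub>R ((t1 / s) *\<^sub>R v1 + (t2 / s) *\<^sub>R v2)"
        using 1 2 s by (simp add: scaleR_add_right)
      ultimately show ?thesis unfolding K_def using s by (intro CollectI exI[of _ s]) auto
    qed
  qed
  have Kscale: "t *\<^sub>R k \<in> K" if hk: "k \<in> K" "0 \<le> t" for k t
  proof -
    obtain s v where "k = s *\<^sub>R v" "0 \<le> s" "v \<in> D" using hk K_def by blast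
    then show ?thesis unfolding K_def using hk by (intro CollectI exI[of _ "t * s"] exI[of _ v]) auto
  qed
  define p where "p z = infdist z K" for z
  have psub: "p (x + y) \<le> p x + p y" for x y
  proof -
    have 1: "p (x + y) \<le> dist x k1 + dist y k2" if "k1 \<in> K" "k2 \<in> K" for k1 k2
    proof -
      have "p (x + y) \<le> dist (x + y) (k1 + k2)" unfolding p_def using infdist_le[OF Kadd[OF that]] .
      also have "\<dots> \<le> dist x k1 + dist y k2"
        unfolding dist_norm using norm_triangle_ineq[of "x - k1" "y - k2"] by (simp add: algebra_simps)
      finally show ?thesis .
    qed
    have 2: "p (x + y) - dist y k2 \<le> p x" if "k2 \<in> K" for k2
      unfolding p_def[of x] by (rule infdist_ge[OF Kne]) (use 1 that in force)
    have "p (x + y) - p x \<le> p y"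
      unfolding p_def[of y] by (rule infdist_ge[OF Kne]) (use 2 in force)
    then show ?thesis by simp
  qed
  have phom: "p (t *\<^sub>R x) = t * p x" if t: "0 < t" for t x
  proof (rule antisym)
    have "p (t *\<^sub>R x) / t \<le> p x"
      unfolding p_def[of x]
    proof (rule infdist_ge[OF Kne])
      fix k assume k: "k \<in> K"
      have "p (t *\<^sub>R x) \<le> dist (t *\<^sub>R x) (t *\<^sub>R k)" unfolding p_def using infdist_le[OF Kscale[OF k]] t by simp
      also have "\<dots> = t * dist x k"
      proof -
        have "t *\<^sub>R x - t *\<^sub>R k = t *\<^sub>R (x - k)" by (simp add: scaleR_diff_right)
        then show ?thesis using t by (simp add: dist_norm)
      qed
      finally show "p (t *\<^sub>R x) / t \<le> dist x k" using t by (simp add: field_simps)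
    qed
    then show "p (t *\<^sub>R x) \<le> t * p x" using t by (simp add: field_simps)
  next
    show "t * p x \<le> p (t *\<^sub>R x)"
      unfolding p_def[of "t *\<^sub>R x"]
    proof (rule infdist_ge[OF Kne])
      fix k assume k: "k \<in> K"
      have "p x \<le> dist x ((1/t) *\<^sub>R k)" unfolding p_def using infdist_le[OF Kscale[OF k]] t by simp
      also have "dist x ((1/t) *\<^sub>R k) = (1/t) * dist (t *\<^sub>R x) k"
      proof -
        have "x - (1/t) *\<^sub>R k = (1/t) *\<^sub>R (t *\<^sub>R x - k)" using t by (simp add: scaleR_diff_right)
        then show ?thesis using t by (simp add: dist_norm)
      qed
      finally show "t * p x \<le> dist (t *\<^sub>R x) k" using t by (simp add: field_simps)
    qed
  qed
  have p0: "p 0 = 0" unfolding p_def using K0 by simp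
  define z0 where "z0 = x0 - c0"
  have z0ne: "z0 \<noteq> 0" using c0 x0 z0_def by auto
  have pz0: "\<delta> \<le> p z0"
    unfolding p_def
  proof (rule infdist_ge[OF Kne])
    fix k assume "k \<in> K"
    then obtain t v where k: "k = t *\<^sub>R v" "0 \<le> t" "v \<in> D" using K_def by blast
    define u where "u = (1/(1+t)) *\<^sub>R (c0 - x0) + (t/(1+t)) *\<^sub>R v"
    have "1/(1+t) + t/(1+t) = 1" using k by (simp add: field_simps)
    then have "u \<in> D" unfolding u_def using k
      by (intro convexD[OF Dconv v0D]) auto
    then have "\<delta> \<le> norm u" by (rule Dnorm)
    also have "\<dots> \<le> (1 + t) * norm u" using k by (simp add: mult_le_cancel_right1)
    also have "(1 + t) * norm u = norm ((1 + t) *\<^sub>R u)" using k by simp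
    also have "(1 + t) *\<^sub>R u = (c0 - x0) + t *\<^sub>R v"
      unfolding u_def using k by (simp add: scaleR_add_right)
    also have "norm \<dots> = dist z0 k"
    proof -
      have "z0 - k = - ((c0 - x0) + t *\<^sub>R v)" unfolding z0_def k(1) by (simp add: algebra_simps)
      then show ?thesis by (simp only: dist_norm norm_minus_cancel)
    qed
    finally show "\<delta> \<le> dist z0 k" .
  qed
  have init: "t * p z0 \<le> p (t *\<^sub>R z0)" for t
  proof (cases "0 < t")
    case True then show ?thesis using phom by simp
  next
    case False
    then have "t * p z0 \<le> 0" using pz0 \<delta> by (simp add: mult_nonpos_nonneg)
    also have "0 \<le> p (t *\<^sub>R z0)" unfolding p_def by (rule infdist_nonneg)
    finally show ?thesis .
  qed
  obtain F where linF: "linear F" and Fp: "\<And>x. F x \<le> p x" and Fz0: "F z0 = p z0"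
    using hahn_banach_aux[of p "p z0" z0, OF psub phom p0 init] by blast
  have Fn: "\<bar>F x\<bar> \<le> norm x" for x
  proof -
    have "F x \<le> norm x" using Fp[of x] infdist_le[OF K0, of x] unfolding p_def by simp
    moreover have "F (- x) \<le> norm x" using Fp[of "-x"] infdist_le[OF K0, of "-x"] unfolding p_def by simp
    moreover have "F (- x) = - F x" using linF by (simp add: linear_neg)
    ultimately show ?thesis by linarith
  qed
  have blF: "bounded_linear F"
  proof (rule bounded_linear_intro[of F 1])
    show "F (x + y) = F x + F y" for x y using linF by (rule linear_add)
    show "F (r *\<^sub>R x) = r *\<^sub>R F x" for r x using linF by (rule linear_scale)
    show "norm (F x) \<le> norm x * 1" for x using Fn[of x] by simp
  qed
  define w where "w = (\<delta> / norm z0) *\<^sub>R z0"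
  have nw: "norm w = \<delta>" unfolding w_def using z0ne \<delta> by simp
  define \<gamma> where "\<gamma> = (\<delta> / norm z0) * \<delta>"
  have \<gamma>: "0 < \<gamma>" unfolding \<gamma>_def using z0ne \<delta> by simp
  have "F c \<le> F x0 - \<gamma>" if c: "c \<in> C" for c
  proof -
    have "c + w - x0 \<in> K" using KD c nw unfolding D_def by blast
    then have "F (c + w - x0) \<le> 0" using Fp[of "c + w - x0"] unfolding p_def by simp
    moreover have "F (c + w - x0) = F c + (\<delta> / norm z0) * F z0 - F x0"
      using linF unfolding w_def by (simp add: linear_add linear_diff linear_scale)
    moreover have "\<gamma> \<le> (\<delta> / norm z0) * F z0"
      unfolding \<gamma>_def Fz0 using pz0 \<delta> z0ne by (intro mult_left_mono) auto
    ultimately show ?thesis by linarith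
  qed
  then have "(\<forall>c\<in>C. F c \<le> F x0 - \<gamma>) \<and> F x0 - \<gamma> < F x0" using \<gamma> by auto
  then show ?thesis using blF by blast
qed

lemma weak_topspace: "topspace (weak_topology :: 'a::real_normed_vector topology) = UNIV"
proof -
  have "UNIV \<in> {f -` U | (f :: 'a \<Rightarrow> real) U. bounded_linear f \<and> open U}"
    by (rule CollectI, rule exI[of _ "\<lambda>x::'a. 0::real"], rule exI[of _ UNIV]) (simp add: bounded_linear_zero)
  then show ?thesis unfolding weak_topology_def topology_generated_by_topspace by blast
qed

lemma weak_open_half:
  fixes F :: "'a::real_normed_vector \<Rightarrow> real"
  assumes "bounded_linear F"
  shows "openin weak_topology {x. a < F x}"
proof -
  have "\<exists>(f :: 'a \<Rightarrow> real) U. {x. a < F x} = f -` U \<and> bounded_linear f \<and> open U"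
    using assms by (intro exI[of _ F] exI[of _ "{a<..}"]) auto
  then have "{x. a < F x} \<in> {f -` U | (f :: 'a \<Rightarrow> real) U. bounded_linear f \<and> open U}"
    by (simp only: mem_Collect_eq)
  then show ?thesis unfolding weak_topology_def by (rule topology_generated_by_Basis)
qed

lemma closed_convex_weakly_closed:
  fixes C :: "'a::real_normed_vector set"
  assumes "closed C" "convex C"
  shows "closedin weak_topology C"
proof (cases "C = {}")
  case True then show ?thesis by simp
next
  case False
  have "openin weak_topology (- C)"
  proof (subst openin_subopen, intro ballI)
    fix x assume "x \<in> - C"
    then obtain F :: "'a \<Rightarrow> real" and a where F: "bounded_linear F" "\<forall>c\<in>C. F c \<le> a" "a < F x"
      using separation[OF assms False] by blast
    show "\<exists>T. openin weak_topology T \<and> x \<in> T \<and> T \<subseteq> - C"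
      using weak_open_half[OF F(1), of a] F(2,3) by (intro exI[of _ "{x. a < F x}"]) force
  qed
  then show ?thesis unfolding closedin_def weak_topspace by (simp add: Compl_eq_Diff_UNIV)
qed

lemma telescope_norm:
  fixes f :: "nat \<Rightarrow> 'a::real_normed_vector"
  shows "norm (f 0 - f k) \<le> (\<Sum>i<k. norm (f i - f (Suc i)))"
proof (induction k)
  case 0 then show ?case by simp
next
  case (Suc k)
  have "norm (f 0 - f (Suc k)) \<le> norm (f 0 - f k) + norm (f k - f (Suc k))"
    using norm_triangle_ineq[of "f 0 - f k" "f k - f (Suc k)"] by simp
  then show ?case using Suc by simp
qed

lemma funpow_fix: "T p = p \<Longrightarrow> (T ^^ n) p = p"
  by (induction n) auto

lemma uniqueness:
  fixes Q :: "'a::real_normed_vector set" and T :: "'a \<Rightarrow> 'a"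
  assumes cvx: "convex Q" and r: "r > 0"
    and beta: "\<And>p. p \<in> Q \<Longrightarrow> 0 \<le> \<beta> p \<and> \<beta> p < 1"
    and conv: "\<And>p. p \<in> Q \<Longrightarrow> (\<lambda>n. \<beta>s n p) \<longlonglongrightarrow> \<beta> p"
    and hyp: "\<And>p q n. p \<in> Q \<Longrightarrow> q \<in> Q \<Longrightarrow> n \<ge> 1 \<Longrightarrow> norm (p - q) < r \<Longrightarrow>
           norm ((T ^^ n) p - (T ^^ n) q) \<le> \<beta>s n p * norm (p - q)"
    and pq: "p \<in> Q" "q \<in> Q" "T p = p" "T q = q"
  shows "p = q"
proof (rule ccontr)
  assume ne: "p \<noteq> q"
  define d where "d = norm (q - p)"
  have d: "0 < d" using ne d_def by simp
  obtain k :: nat where k: "d / r < real k" using reals_Archimedean2 by blast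
  have k0: "0 < k"
  proof (rule ccontr)
    assume "\<not> 0 < k"
    then have "real k = 0" by simp
    moreover have "0 < d / r" using d r by simp
    ultimately show False using k by simp
  qed
  have kr: "d / real k < r" using k k0 r d by (simp add: field_simps)
  define w where "w i = p + (real i / real k) *\<^sub>R (q - p)" for i :: nat
  have wQ: "w i \<in> Q" if "i \<le> k" for i
  proof -
    have "w i = (1 - real i / real k) *\<^sub>R p + (real i / real k) *\<^sub>R q"
      unfolding w_def by (simp add: algebra_simps)
    moreover have "real i / real k \<le> 1" using that k0 by simp
    ultimately show ?thesis using convexD[OF cvx pq(1) pq(2), of "1 - real i / real k" "real i / real k"]
      by simp
  qed
  have wdiff: "norm (w i - w (Suc i)) = d / real k" for i
  proof -
    have "w i - w (Suc i) = (real i / real k - real (Suc i) / real k) *\<^sub>R (q - p)"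
      unfolding w_def by (simp add: scaleR_diff_left)
    also have "real i / real k - real (Suc i) / real k = - (1 / real k)"
      by (simp add: diff_divide_distrib[symmetric])
    finally show ?thesis unfolding d_def by simp
  qed
  have w0: "w 0 = p" unfolding w_def by simp
  have wk: "w k = q" unfolding w_def using k0 by simp
  have ev: "\<forall>i\<in>{..<k}. eventually (\<lambda>n. \<beta>s n (w i) < 1) sequentially"
  proof
    fix i assume "i \<in> {..<k}"
    then have "w i \<in> Q" using wQ by simp
    then show "eventually (\<lambda>n. \<beta>s n (w i) < 1) sequentially"
      using order_tendstoD(2)[OF conv[of "w i"]] beta by blast
  qed
  have "eventually (\<lambda>n. (\<forall>i\<in>{..<k}. \<beta>s n (w i) < 1) \<and> n \<ge> 1) sequentially"
    using eventually_ball_finite[OF _ ev] eventually_ge_at_top[of 1] eventually_conj by blast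
  then obtain N where N: "\<And>n. n \<ge> N \<Longrightarrow> (\<forall>i\<in>{..<k}. \<beta>s n (w i) < 1) \<and> n \<ge> 1"
    unfolding eventually_sequentially by blast
  define n where "n = N"
  have n: "\<And>i. i < k \<Longrightarrow> \<beta>s n (w i) < 1" "n \<ge> 1" using N[of N] unfolding n_def by auto
  have "d = norm ((T ^^ n) (w 0) - (T ^^ n) (w k))"
    unfolding w0 wk funpow_fix[of T p n, OF pq(3)] funpow_fix[of T q n, OF pq(4)] d_def by (simp add: norm_minus_commute)
  also have "\<dots> \<le> (\<Sum>i<k. norm ((T ^^ n) (w i) - (T ^^ n) (w (Suc i))))"
    by (rule telescope_norm[of "\<lambda>i. (T ^^ n) (w i)"])
  also have "\<dots> \<le> (\<Sum>i<k. \<beta>s n (w i) * (d / real k))"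
  proof (rule sum_mono)
    fix i assume "i \<in> {..<k}"
    then show "norm ((T ^^ n) (w i) - (T ^^ n) (w (Suc i))) \<le> \<beta>s n (w i) * (d / real k)"
      using hyp[of "w i" "w (Suc i)" n] wQ n(2) wdiff kr by simp
  qed
  also have "\<dots> < (\<Sum>i<k. d / real k)"
  proof (rule sum_strict_mono)
    fix i assume "i \<in> {..<k}"
    show "\<beta>s n (w i) * (d / real k) < d / real k"
    proof -
      have "0 < d / real k" using d k0 by simp
      then have "\<beta>s n (w i) * (d / real k) < 1 * (d / real k)"
        using n(1)[of i] \<open>i \<in> {..<k}\<close> by (intro mult_strict_right_mono) auto
      then show ?thesis by simp
    qed
  qed (use k0 in auto)
  also have "\<dots> = d" using k0 by simp
  finally show False by simp
qed

theorem mainTheorem7: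
  fixes Q :: "'a::banach set" and T :: "'a \<Rightarrow> 'a"
    and r :: real and \<beta> :: "'a \<Rightarrow> real" and \<beta>s :: "nat \<Rightarrow> 'a \<Rightarrow> real"
  assumes "weakly_compact Q" and "convex Q"
    and "r > 0"
    and "\<And>p. p \<in> Q \<Longrightarrow> 0 \<le> \<beta> p \<and> \<beta> p < 1"
    and "\<And>p. p \<in> Q \<Longrightarrow> (\<lambda>n. \<beta>s n p) \<longlonglongrightarrow> \<beta> p"
    and "T ` Q \<subseteq> Q"
    and "\<And>p q n. p \<in> Q \<Longrightarrow> q \<in> Q \<Longrightarrow> n \<ge> 1 \<Longrightarrow> norm (p - q) < r \<Longrightarrow>
           norm ((T ^^ n) p - (T ^^ n) q) \<le> \<beta>s n p * norm (p - q)"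
    and "\<exists>q0\<in>Q. asym_radius Q (\<lambda>n. (T ^^ n) q0) < ereal r"
  shows "\<exists>!p. p \<in> Q \<and> T p = p"
proof -
  note wc = assms(1) and cvx = assms(2) and r = assms(3) and beta = assms(4) and conv = assms(5)
    and TQ = assms(6) and hyp = assms(7)
  have TnQ: "(T ^^ n) p \<in> Q" if "p \<in> Q" for n p
    using that TQ by (induction n) auto
  obtain q0 where q0: "q0 \<in> Q" and rad: "asym_radius Q (\<lambda>n. (T ^^ n) q0) < ereal r"
    using assms(8) by blast
  define x where "x n = (T ^^ n) q0" for n
  have xQ: "x n \<in> Q" for n unfolding x_def using TnQ q0 by simp
  define ub where "ub y t \<longleftrightarrow> (\<forall>e>0. eventually (\<lambda>n. norm (x n - y) \<le> t + e) sequentially)" for y t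
  have ubD: "eventually (\<lambda>n. norm (x n - y) \<le> t + e) sequentially" if "ub y t" "0 < e" for y t e
    using that unfolding ub_def by blast
  obtain y0 where y0: "y0 \<in> Q" and y0r: "limsup (\<lambda>n. ereal (norm (x n - y0))) < ereal r"
    using rad unfolding asym_radius_def x_def by (auto simp: INF_less_iff)
  obtain z where z1: "limsup (\<lambda>n. ereal (norm (x n - y0))) < z" and z2: "z < ereal r"
    using dense[OF y0r] by blast
  have "eventually (\<lambda>n. ereal (norm (x n - y0)) < z) sequentially"
    using Limsup_lessD[OF z1] .
  then obtain N0 where N0: "\<And>n. n \<ge> N0 \<Longrightarrow> ereal (norm (x n - y0)) < z"
    unfolding eventually_sequentially by blast
  obtain r' where zr': "z = ereal r'"
    using N0[of N0] z2 by (cases z) auto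
  have r'r: "r' < r" using z2 zr' by simp
  have ub0: "ub y0 r'"
    unfolding ub_def
  proof (intro allI impI)
    fix e :: real assume "e > 0"
    show "eventually (\<lambda>n. norm (x n - y0) \<le> r' + e) sequentially"
      unfolding eventually_sequentially using N0 zr' \<open>e > 0\<close>
      by (intro exI[of _ N0]) (force intro: less_imp_le)
  qed
  have ub_nonneg: "0 \<le> t" if "ub y t" for y t
  proof (rule ccontr)
    assume "\<not> 0 \<le> t"
    then have "eventually (\<lambda>n. norm (x n - y) \<le> t + (- t / 2)) sequentially"
    proof -
      have "0 < - t / 2" using \<open>\<not> 0 \<le> t\<close> by simp
      then show ?thesis using that unfolding ub_def by blast
    qed
    then obtain N where "\<forall>n\<ge>N. norm (x n - y) \<le> t + (- t / 2)" unfolding eventually_sequentially by blast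
    then have "norm (x N - y) \<le> t + (- t / 2)" by simp
    then show False using \<open>\<not> 0 \<le> t\<close> norm_ge_zero[of "x N - y"] by linarith
  qed
  have ub_mono: "ub y s" if "ub y t" "t \<le> s" for y t s
    unfolding ub_def
  proof (intro allI impI)
    fix e :: real assume "e > 0"
    then have "eventually (\<lambda>n. norm (x n - y) \<le> t + e) sequentially"
      using that(1) unfolding ub_def by blast
    then show "eventually (\<lambda>n. norm (x n - y) \<le> s + e) sequentially"
      by (rule eventually_mono) (use that(2) in linarith)
  qed
  define S where "S = {t. \<exists>y\<in>Q. ub y t}"
  have r'S: "r' \<in> S" using y0 ub0 S_def by blast
  have Sbdd: "bdd_below S" unfolding bdd_below_def S_def using ub_nonneg by blast
  define R where "R = Inf S"
  have RS: "R \<le> t" if "t \<in> S" for t unfolding R_def using cInf_lower[OF that Sbdd] .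
  have R0: "0 \<le> R" unfolding R_def using r'S ub_nonneg S_def by (intro cInf_greatest) auto
  have Rr: "R < r" using RS[OF r'S] r'r by simp
  define E where "E t = {y. ub y t}" for t
  have Eclosed: "closed (E t)" for t
    unfolding closed_sequential_limits
  proof (intro allI impI)
    fix zs l assume h: "(\<forall>n. zs n \<in> E t) \<and> zs \<longlonglongrightarrow> l"
    show "l \<in> E t" unfolding E_def ub_def
    proof (intro CollectI allI impI)
      fix e :: real assume e: "e > 0"
      have "eventually (\<lambda>n. dist (zs n) l < e / 2) sequentially"
      proof -
        have "0 < e / 2" using e by simp
        then show ?thesis using h unfolding tendsto_iff by blast
      qed
      then obtain Nk where "\<forall>n\<ge>Nk. dist (zs n) l < e / 2" unfolding eventually_sequentially by blast
      then have k: "dist (zs Nk) l < e / 2" by simp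
      define k where "k = Nk"
      note k = k[folded k_def]
      have "eventually (\<lambda>n. norm (x n - zs k) \<le> t + e / 2) sequentially"
        using ubD[of "zs k" t "e/2"] h e unfolding E_def by simp
      then show "eventually (\<lambda>n. norm (x n - l) \<le> t + e) sequentially"
      proof (rule eventually_mono)
        fix n assume "norm (x n - zs k) \<le> t + e / 2"
        moreover have "norm (x n - l) \<le> norm (x n - zs k) + norm (zs k - l)"
          using norm_triangle_ineq[of "x n - zs k" "zs k - l"] by simp
        moreover have "norm (zs k - l) < e / 2" using k by (simp add: dist_norm)
        ultimately show "norm (x n - l) \<le> t + e" by simp
      qed
    qed
  qed
  have Econvex: "convex (E t)" for t
  proof (rule convexI)
    fix y1 y2 and a b :: real assume h: "y1 \<in> E t" "y2 \<in> E t" "0 \<le> a" "0 \<le> b" "a + b = 1"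
    show "a *\<^sub>R y1 + b *\<^sub>R y2 \<in> E t" unfolding E_def ub_def
    proof (intro CollectI allI impI)
      fix e :: real assume e: "e > 0"
      have "eventually (\<lambda>n. norm (x n - y1) \<le> t + e \<and> norm (x n - y2) \<le> t + e) sequentially"
        using ubD[of y1 t e] ubD[of y2 t e] h(1,2) e unfolding E_def by (simp add: eventually_conj)
      then show "eventually (\<lambda>n. norm (x n - (a *\<^sub>R y1 + b *\<^sub>R y2)) \<le> t + e) sequentially"
      proof (rule eventually_mono)
        fix n assume hn: "norm (x n - y1) \<le> t + e \<and> norm (x n - y2) \<le> t + e"
        have "x n - (a *\<^sub>R y1 + b *\<^sub>R y2) = a *\<^sub>R (x n - y1) + b *\<^sub>R (x n - y2)"
        proof -
          have "x n = (a + b) *\<^sub>R x n" using h(5) by simp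
          then show ?thesis by (simp add: algebra_simps)
        qed
        then have "norm (x n - (a *\<^sub>R y1 + b *\<^sub>R y2)) \<le> a * norm (x n - y1) + b * norm (x n - y2)"
          using norm_triangle_ineq[of "a *\<^sub>R (x n - y1)" "b *\<^sub>R (x n - y2)"] h(3,4) by simp
        also have "\<dots> \<le> a * (t + e) + b * (t + e)"
          using hn h(3,4) by (intro add_mono mult_left_mono) auto
        also have "\<dots> = t + e" using h(5) by (simp add: distrib_right[symmetric])
        finally show "norm (x n - (a *\<^sub>R y1 + b *\<^sub>R y2)) \<le> t + e" .
      qed
    qed
  qed
  have Ene: "Q \<inter> E t \<noteq> {}" if Rt: "R < t" for t
  proof -
    have "S \<noteq> {}" using r'S by blast
    then obtain s where "s \<in> S" "s < t" using cInf_lessD[of S t] Rt R_def by blast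
    then show ?thesis unfolding S_def E_def using ub_mono by force
  qed
  have Emono: "E s \<subseteq> E t" if "s \<le> t" for s t unfolding E_def using ub_mono that by blast
  have "\<exists>y\<in>Q. \<forall>t>R. y \<in> E t"
  proof (rule ccontr)
    assume nc: "\<not> (\<exists>y\<in>Q. \<forall>t>R. y \<in> E t)"
    define U where "U = (\<lambda>t. - E t) ` {t. R < t}"
    have Uopen: "\<forall>u\<in>U. openin weak_topology u"
    proof
      fix u assume "u \<in> U"
      then obtain t where "u = - E t" unfolding U_def by blast
      moreover have "closedin weak_topology (E t)"
        using closed_convex_weakly_closed[OF Eclosed Econvex] .
      ultimately show "openin weak_topology u"
        unfolding closedin_def weak_topspace by (simp add: Compl_eq_Diff_UNIV)
    qed
    have cover: "Q \<subseteq> \<Union>U" using nc unfolding U_def by blast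
    have "compactin weak_topology Q" using wc unfolding weakly_compact_def .
    then have "\<forall>U. (\<forall>u\<in>U. openin weak_topology u) \<and> Q \<subseteq> \<Union>U \<longrightarrow>
        (\<exists>G. finite G \<and> G \<subseteq> U \<and> Q \<subseteq> \<Union>G)"
      unfolding compactin_def by (rule conjunct2)
    then have "\<exists>G. finite G \<and> G \<subseteq> U \<and> Q \<subseteq> \<Union>G"
      using Uopen cover by blast
    then obtain G where G: "finite G" "G \<subseteq> U" "Q \<subseteq> \<Union>G" by blast
    obtain Ts where Ts: "Ts \<subseteq> {t. R < t}" "finite Ts" "G = (\<lambda>t. - E t) ` Ts"
      using finite_subset_image[OF G(1) G(2)[unfolded U_def]] by blast
    show False
    proof (cases "Ts = {}")
      case True then show False using G Ts y0 by auto
    next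
      case False
      define t0 where "t0 = Min Ts"
      have "t0 \<in> Ts" unfolding t0_def using Ts False by simp
      then have "R < t0" using Ts by auto
      then obtain y where y: "y \<in> Q" "y \<in> E t0" using Ene by blast
      have "y \<in> E t" if "t \<in> Ts" for t
        using Emono[of t0 t] y Ts that unfolding t0_def by auto
      then show False using G Ts y by auto
    qed
  qed
  then obtain y where yQ: "y \<in> Q" and yE: "\<And>t. R < t \<Longrightarrow> y \<in> E t" by blast
  have ubR: "ub y R" unfolding ub_def
  proof (intro allI impI)
    fix e :: real assume e: "e > 0"
    have "ub y (R + e / 2)" using yE[of "R + e/2"] e unfolding E_def by simp
    then have "eventually (\<lambda>n. norm (x n - y) \<le> R + e / 2 + e / 2) sequentially"
      using ubD[of y "R + e/2" "e/2"] e by simp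
    then show "eventually (\<lambda>n. norm (x n - y) \<le> R + e) sequentially" by (simp add: add.commute)
  qed
  have "R = 0"
  proof (rule ccontr)
    assume "R \<noteq> 0"
    then have Rpos: "0 < R" using R0 by simp
    have "eventually (\<lambda>m. \<beta>s m y < 1) sequentially"
      using order_tendstoD(2)[OF conv[OF yQ]] beta[OF yQ] by blast
    then obtain N where N: "\<And>m. m \<ge> N \<Longrightarrow> \<beta>s m y < 1" unfolding eventually_sequentially by blast
    define m where "m = Suc N"
    have m1: "m \<ge> 1" unfolding m_def by simp
    define cc where "cc = max (\<beta>s m y) 0"
    have cc: "0 \<le> cc" "cc < 1" unfolding cc_def using N[of m] m_def by auto
    have "ub ((T ^^ m) y) (cc * R)"
      unfolding ub_def
    proof (intro allI impI)
      fix e :: real assume e: "e > 0"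
      define e' where "e' = min e ((r - R) / 2)"
      have e': "0 < e'" "e' \<le> e" "R + e' < r" unfolding e'_def using e Rr by (auto simp: min_def field_simps)
      obtain N1 where N1: "\<And>n. n \<ge> N1 \<Longrightarrow> norm (x n - y) \<le> R + e'"
        using ubR e' unfolding ub_def eventually_sequentially by blast
      show "eventually (\<lambda>n. norm (x n - (T ^^ m) y) \<le> cc * R + e) sequentially"
        unfolding eventually_sequentially
      proof (intro exI[of _ "N1 + m"] allI impI)
        fix n assume n: "n \<ge> N1 + m"
        define k where "k = n - m"
        have k: "k \<ge> N1" "n = m + k" using n k_def by auto
        have xn: "x n = (T ^^ m) (x k)" unfolding x_def k(2) by (simp add: funpow_add)
        have nk: "norm (y - x k) \<le> R + e'" using N1[OF k(1)] by (simp add: norm_minus_commute)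
        have "norm (x n - (T ^^ m) y) = norm ((T ^^ m) y - (T ^^ m) (x k))"
          unfolding xn by (simp add: norm_minus_commute)
        also have "\<dots> \<le> \<beta>s m y * norm (y - x k)"
          using hyp[OF yQ xQ m1] nk e' by simp
        also have "\<dots> \<le> cc * norm (y - x k)" unfolding cc_def by (intro mult_right_mono) auto
        also have "\<dots> \<le> cc * (R + e')" using nk cc by (intro mult_left_mono) auto
        also have "\<dots> \<le> cc * R + e"
        proof -
          have "cc * e' \<le> 1 * e'" using cc e' by (intro mult_right_mono) auto
          then have "cc * e' \<le> e'" by simp
          moreover have "cc * (R + e') = cc * R + cc * e'" by (simp add: distrib_left)
          ultimately show ?thesis using e' by linarith
        qed
        finally show "norm (x n - (T ^^ m) y) \<le> cc * R + e" .
      qed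
    qed
    then have "cc * R \<in> S" unfolding S_def using TnQ[OF yQ] by blast
    then have "R \<le> cc * R" by (rule RS)
    moreover have "cc * R < 1 * R" using cc Rpos by (intro mult_strict_right_mono) auto
    ultimately show False by simp
  qed
  have xlim: "x \<longlonglongrightarrow> y"
    unfolding tendsto_iff
  proof (intro allI impI)
    fix e :: real assume e: "e > 0"
    have "eventually (\<lambda>n. norm (x n - y) \<le> R + e / 2) sequentially"
      using ubD[OF ubR, of "e/2"] e by simp
    then show "eventually (\<lambda>n. dist (x n) y < e) sequentially"
      by (rule eventually_mono) (use \<open>R = 0\<close> e in \<open>simp add: dist_norm\<close>)
  qed
  have xsuc: "x (Suc n) = T (x n)" for n unfolding x_def by simp
  have "(\<lambda>n. x (Suc n)) \<longlonglongrightarrow> T y"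
    unfolding tendsto_iff
  proof (intro allI impI)
    fix e :: real assume e: "e > 0"
    define B where "B = \<bar>\<beta>s 1 y\<bar> + 1"
    have B: "0 < B" unfolding B_def by simp
    define e' where "e' = min r (e / B)"
    have e': "0 < e'" unfolding e'_def using r e B by simp
    have "eventually (\<lambda>n. dist (x n) y < e') sequentially"
      using xlim e' unfolding tendsto_iff by blast
    then show "eventually (\<lambda>n. dist (x (Suc n)) (T y) < e) sequentially"
    proof (rule eventually_mono)
      fix n assume hn: "dist (x n) y < e'"
      then have hn': "norm (y - x n) < e'" by (simp add: dist_norm norm_minus_commute)
      have "dist (x (Suc n)) (T y) = norm ((T ^^ 1) y - (T ^^ 1) (x n))"
        unfolding xsuc by (simp add: dist_norm norm_minus_commute)
      also have "\<dots> \<le> \<beta>s 1 y * norm (y - x n)"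
        using hyp[OF yQ xQ, of 1] hn' e'_def by simp
      also have "\<dots> \<le> B * norm (y - x n)" unfolding B_def by (intro mult_right_mono) auto
      also have "\<dots> < B * e'" using hn' B by simp
      also have "\<dots> \<le> B * (e / B)" using B unfolding e'_def by (intro mult_left_mono) auto
      also have "\<dots> = e" using B by simp
      finally show "dist (x (Suc n)) (T y) < e" .
    qed
  qed
  moreover have "(\<lambda>n. x (Suc n)) \<longlonglongrightarrow> y" using LIMSEQ_Suc[OF xlim] .
  ultimately have Ty: "T y = y" using LIMSEQ_unique by blast
  show ?thesis
  proof (rule ex1I[of _ y])
    show "y \<in> Q \<and> T y = y" using yQ Ty by simp
    fix p assume "p \<in> Q \<and> T p = p"
    then show "p = y" using uniqueness[OF cvx r beta conv hyp, of p y] yQ Ty by blast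
  qed
qed

end
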